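(* Let $w\ge5$, $t\in[2,w-2]$ and $\tilde h>2w^3$ be integers, and let $n'=\tilde h(w-1)$. Let $\{a_0=0,a_1,\dots,a_{w-2}\}$ be a $(\tilde h,w-1)$ modular Golomb ruler, with each $a_s$ represented by an integer in $[0,\tilde h-1]$. Define vectors in $\{0,1,2\}^{\mathbb Z_{n'}}$ (positions indexed by $\mathbb Z_{n'}$, all arithmetic mod $n'$) as follows. (1) For $i\in[0,t-2]$ and $j\in[0,\tilde h-1]$, $\mathbf a_{i,j}$ has support $\{(a_s+j)(w-1)+i: s\in[0,w-2]\}$, with position $(a_{w-2}+j)(w-1)+i$ having value $2$ and all other support positions value $1$. (2) For $i\in[0,w-t-1]$ and $j\in[0,\tilde h-1]$, $\mathbf b_{i,j}$ has support $\{(si+j)(w-1)+s-1: s\in[1,w-1]\}$, with position $((t+i)i+j)(w-1)+(t+i-1)$ having value $2$ and all other support positions value $1$. Let $\mathcal H=\{\mathbf a_{i,j}\}\cup\{\mathbf b_{i,j}\}$. Then $\mathcal H$ is an $(n',2w-2,w)_3$ code. Moreover, exactly $\tilde h(w-t)$ positions $v\in\mathbb Z_{n'}$ lie in the supports of exactly $w-t$ codewords of $\mathcal H$, and every other position lies in the supports of exactly $2w-t-1$ codewords of $\mathcal H$.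
   Context: An $(m,k)$ modular Golomb ruler is a set of $k$ elements of $\mathbb Z_m$ whose pairwise differences $a_i-a_j$ ($i\ne j$) in $\mathbb Z_m$ are nonzero and pairwise distinct. The $\ell_1$-distance between ternary vectors $u,v$ is $\sum|u_i-v_i|$ and the $\ell_1$-weight of $u$ is its distance to $0$. An $(n,d,w)_3$ code is a set of ternary vectors of length $n$ each of $\ell_1$-weight $w$ with pairwise $\ell_1$-distance at least $d$ (here length $n'$ with positions indexed by $\mathbb Z_{n'}$). *)

theory Defs
  imports Main
begin

text \<open>Elements of Z_m are represented by their canonical integer representatives in {0..<m}.
  Ternary vectors of length n (positions indexed by Z_n) are functions int => int,
  meaningful on positions {0..<n} and zero elsewhere.\<close>

definition mod_golomb_ruler :: "int \<Rightarrow> int \<Rightarrow> int set \<Rightarrow> bool" where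
  "mod_golomb_ruler m k A \<longleftrightarrow>
     A \<subseteq> {0..<m} \<and> card A = nat k \<and>
     (\<forall>x\<in>A. \<forall>y\<in>A. \<forall>u\<in>A. \<forall>v\<in>A. x \<noteq> y \<longrightarrow> u \<noteq> v \<longrightarrow>
        (x - y) mod m \<noteq> 0 \<and> ((x - y) mod m = (u - v) mod m \<longrightarrow> x = u \<and> y = v))"

definition l1_dist :: "int \<Rightarrow> (int \<Rightarrow> int) \<Rightarrow> (int \<Rightarrow> int) \<Rightarrow> int" where
  "l1_dist n u v = (\<Sum>p\<in>{0..<n}. \<bar>u p - v p\<bar>)"

definition l1_weight :: "int \<Rightarrow> (int \<Rightarrow> int) \<Rightarrow> int" where
  "l1_weight n u = l1_dist n u (\<lambda>_. 0)"

definition ternary_code :: "int \<Rightarrow> int \<Rightarrow> int \<Rightarrow> (int \<Rightarrow> int) set \<Rightarrow> bool" where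
  "ternary_code n d w C \<longleftrightarrow>
     (\<forall>c\<in>C. (\<forall>p. c p \<in> {0, 1, 2}) \<and> (\<forall>p. p \<notin> {0..<n} \<longrightarrow> c p = 0) \<and> l1_weight n c = w) \<and>
     (\<forall>c\<in>C. \<forall>c'\<in>C. c \<noteq> c' \<longrightarrow> l1_dist n c c' \<ge> d)"

definition supp_vec :: "int \<Rightarrow> (int \<Rightarrow> int) \<Rightarrow> int set" where
  "supp_vec n c = {p \<in> {0..<n}. c p \<noteq> 0}"

definition vec_a :: "int \<Rightarrow> int \<Rightarrow> (int \<Rightarrow> int) \<Rightarrow> int \<Rightarrow> int \<Rightarrow> int \<Rightarrow> int" where
  "vec_a n w a i j p =
     (if p = ((a (w - 2) + j) * (w - 1) + i) mod n then 2
      else if p \<in> {((a s + j) * (w - 1) + i) mod n | s. 0 \<le> s \<and> s \<le> w - 2} then 1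
      else 0)"

definition vec_b :: "int \<Rightarrow> int \<Rightarrow> int \<Rightarrow> int \<Rightarrow> int \<Rightarrow> int \<Rightarrow> int" where
  "vec_b n w t i j p =
     (if p = (((t + i) * i + j) * (w - 1) + (t + i - 1)) mod n then 2
      else if p \<in> {((s * i + j) * (w - 1) + s - 1) mod n | s. 1 \<le> s \<and> s \<le> w - 1} then 1
      else 0)"

end

theory Submission
  imports Defs
begin



definition gvec :: "(int \<Rightarrow> int) \<Rightarrow> int set \<Rightarrow> int \<Rightarrow> int \<Rightarrow> int" where
  "gvec f S s0 p = (if p = f s0 then 2 else if p \<in> f ` S then 1 else 0)"

lemma gvec_vals: "gvec f S s0 p \<in> {0,1,2}"
  by (simp add: gvec_def)

lemma gvec_out: "f ` S \<subseteq> {0..<n} \<Longrightarrow> s0 \<in> S \<Longrightarrow> p \<notin> {0..<n} \<Longrightarrow> gvec f S s0 p = 0"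
  unfolding gvec_def by auto

lemma gvec_supp: "f ` S \<subseteq> {0..<n} \<Longrightarrow> s0 \<in> S \<Longrightarrow> supp_vec n (gvec f S s0) = f ` S"
  unfolding gvec_def supp_vec_def by auto

lemma gvec_sum:
  assumes "f ` S \<subseteq> {0..<n}" "s0 \<in> S" "finite S" "inj_on f S"
  shows "(\<Sum>p\<in>{0..<n}. gvec f S s0 p) = int (card S) + 1"
proof -
  have e1: "(\<Sum>p\<in>{0..<n}. gvec f S s0 p) = (\<Sum>p\<in>f ` S. gvec f S s0 p)"
    by (rule sum.mono_neutral_right) (use assms in \<open>auto simp: gvec_def\<close>)
  have fin: "finite (f ` S)" using assms by simp
  have mem: "f s0 \<in> f ` S" using assms by simp
  have e2: "(\<Sum>p\<in>f ` S. gvec f S s0 p) = gvec f S s0 (f s0) + (\<Sum>p\<in>f ` S - {f s0}. gvec f S s0 p)"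
    using sum.remove[OF fin mem] .
  have e3: "(\<Sum>p\<in>f ` S - {f s0}. gvec f S s0 p) = (\<Sum>p\<in>f ` S - {f s0}. 1)"
    by (rule sum.cong) (auto simp: gvec_def)
  have c1: "card (f ` S) = card S" using assms by (simp add: card_image)
  have c2: "card S \<ge> 1" using assms(2,3) by (metis One_nat_def Suc_leI card_gt_0_iff empty_iff)
  have e4: "(\<Sum>p\<in>f ` S - {f s0}. (1::int)) = int (card S) - 1"
    using c1 c2 mem by (simp add: card_Diff_singleton of_nat_diff)
  have e5: "gvec f S s0 (f s0) = 2" by (simp add: gvec_def)
  show ?thesis using e1 e2 e3 e4 e5 by linarith
qed

lemma gvec_weight:
  assumes "f ` S \<subseteq> {0..<n}" "s0 \<in> S" "finite S" "inj_on f S"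
  shows "l1_weight n (gvec f S s0) = int (card S) + 1"
proof -
  have "l1_weight n (gvec f S s0) = (\<Sum>p\<in>{0..<n}. gvec f S s0 p)"
    unfolding l1_weight_def l1_dist_def by (rule sum.cong) (auto simp: gvec_def)
  then show ?thesis using gvec_sum[OF assms] by simp
qed

lemma gvec_dist:
  assumes "f ` S \<subseteq> {0..<n}" "s0 \<in> S" "finite S" "inj_on f S"
    and "g ` T \<subseteq> {0..<n}" "t0 \<in> T" "finite T" "inj_on g T"
    and "card (f ` S \<inter> g ` T) \<le> 1" and "f s0 \<noteq> g t0"
  shows "l1_dist n (gvec f S s0) (gvec g T t0) \<ge> int (card S) + int (card T)"
proof -
  let ?u = "gvec f S s0" and ?v = "gvec g T t0"
  let ?I = "f ` S \<inter> g ` T"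
  have pt: "\<bar>?u p - ?v p\<bar> \<ge> ?u p + ?v p - 2 * of_bool (p \<in> ?I)" for p
  proof -
    have "f s0 \<in> f ` S" "g t0 \<in> g ` T" using assms(2,6) by auto
    then have u: "(p \<notin> f ` S \<and> ?u p = 0) \<or> (p \<in> f ` S \<and> p = f s0 \<and> ?u p = 2) \<or> (p \<in> f ` S \<and> ?u p = 1)"
      unfolding gvec_def by (cases "p = f s0"; simp)
    have v: "(p \<notin> g ` T \<and> ?v p = 0) \<or> (p \<in> g ` T \<and> p = g t0 \<and> ?v p = 2) \<or> (p \<in> g ` T \<and> ?v p = 1)"
      using \<open>g t0 \<in> g ` T\<close> unfolding gvec_def by (cases "p = g t0"; simp)
    show ?thesis using u v assms(10) by (elim disjE conjE) auto
  qed
  have d1: "l1_dist n ?u ?v \<ge> (\<Sum>p\<in>{0..<n}. ?u p + ?v p - 2 * of_bool (p \<in> ?I))"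
    unfolding l1_dist_def by (rule sum_mono) (rule pt)
  have d2: "(\<Sum>p\<in>{0..<n}. ?u p + ?v p - 2 * of_bool (p \<in> ?I))
      = (\<Sum>p\<in>{0..<n}. ?u p) + (\<Sum>p\<in>{0..<n}. ?v p) - 2 * (\<Sum>p\<in>{0..<n}. of_bool (p \<in> ?I))"
    by (simp only: sum.distrib sum_subtractf sum_distrib_left)
  have d3: "(\<Sum>p\<in>{0..<n}. (of_bool (p \<in> ?I) :: int)) = int (card ?I)"
  proof -
    have "(\<Sum>p\<in>{0..<n}. (of_bool (p \<in> ?I) :: int)) = (\<Sum>p\<in>?I. 1)"
      by (rule sum.mono_neutral_cong_right) (use assms in auto)
    then show ?thesis by simp
  qed
  have d4: "int (card ?I) \<le> 1" using assms(9) by simp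
  show ?thesis using d1 d2 d3 d4 gvec_sum[OF assms(1-4)] gvec_sum[OF assms(5-8)] by linarith
qed

lemma pos_mod:
  fixes X r m h :: int
  assumes "0 \<le> r" "r < m" "0 < h"
  shows "(X * m + r) mod (h * m) = (X mod h) * m + r"
proof -
  have e: "h * (X div h) + X mod h = X" by (rule mult_div_mod_eq)
  have "X * m + r = (h * (X div h) + X mod h) * m + r" by (simp only: e)
  also have "\<dots> = (X div h) * (h * m) + ((X mod h) * m + r)"
  proof -
    have "\<And>q s. (h * q + s) * m + r = q * (h * m) + (s * m + r)" by (simp add: algebra_simps)
    then show ?thesis by blast
  qed
  finally have "X * m + r = (X div h) * (h * m) + ((X mod h) * m + r)" .
  moreover have "0 \<le> (X mod h) * m + r" using assms by simp
  moreover have "(X mod h) * m + r < h * m"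
  proof -
    have "X mod h \<le> h - 1" using assms by simp
    then have "(X mod h) * m \<le> (h - 1) * m" using assms by (intro mult_right_mono) auto
    then show ?thesis using assms by (simp add: algebra_simps)
  qed
  ultimately show ?thesis by (metis mod_mult_self3 mod_pos_pos_trivial add.commute)
qed

lemma pos_range:
  fixes x r m h :: int
  assumes "0 \<le> r" "r < m" "0 \<le> x" "x < h"
  shows "0 \<le> x * m + r \<and> x * m + r < h * m"
proof -
  have "x * m \<le> (h - 1) * m" using assms by (intro mult_right_mono) auto
  then show ?thesis using assms by (simp add: algebra_simps)
qed

lemma pos_inj:
  fixes x r x' r' m :: int
  assumes "0 \<le> r" "r < m" "0 \<le> r'" "r' < m"
  shows "x * m + r = x' * m + r' \<longleftrightarrow> x = x' \<and> r = r'"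
proof
  assume e: "x * m + r = x' * m + r'"
  have "(x * m + r) div m = x" "(x * m + r) mod m = r" "(x' * m + r') div m = x'" "(x' * m + r') mod m = r'"
    using assms by auto
  then show "x = x' \<and> r = r'" using e by metis
qed auto




lemma modeq_dvd: "((x::int) mod h = y mod h) \<longleftrightarrow> h dvd (x - y)"
  by (simp add: mod_eq_dvd_iff)

lemma mod_small_eq: "0 \<le> (x::int) \<Longrightarrow> x < h \<Longrightarrow> 0 \<le> y \<Longrightarrow> y < h \<Longrightarrow> x mod h = y mod h \<Longrightarrow> x = y"
  by simp

lemma dvd_small_zero:
  fixes h z :: int
  assumes "h dvd z" "\<bar>z\<bar> < h"
  shows "z = 0"
proof (rule ccontr)
  assume "z \<noteq> 0"
  then have "0 < \<bar>z\<bar>" by simp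
  moreover have "h dvd \<bar>z\<bar>" using assms(1) by simp
  ultimately have "h \<le> \<bar>z\<bar>" using zdvd_imp_le by blast
  then show False using assms(2) by simp
qed

locale gsetup =
  fixes w t h :: int and a :: "int \<Rightarrow> int"
  assumes w5: "w \<ge> 5" and t2: "2 \<le> t" and tw: "t \<le> w - 2" and hbig: "h > 2 * w ^ 3"
    and gol: "mod_golomb_ruler h (w - 1) (a ` {0..w - 2})"
    and a_range: "\<forall>s\<in>{0..w - 2}. 0 \<le> a s \<and> a s \<le> h - 1"
begin

definition fA :: "int \<Rightarrow> int \<Rightarrow> int \<Rightarrow> int" where
  "fA i j s = ((a s + j) mod h) * (w - 1) + i"

definition fB :: "int \<Rightarrow> int \<Rightarrow> int \<Rightarrow> int" where
  "fB i j s = ((s * i + j) mod h) * (w - 1) + (s - 1)"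

lemma hww: "w * w < h"
proof -
  have "w * w * 1 \<le> w * w * w" using w5 by (intro mult_left_mono) auto
  moreover have "w ^ 3 = w * w * w" by (simp add: power3_eq_cube)
  moreover have "0 \<le> w * w" by simp
  ultimately show ?thesis using hbig by linarith
qed

lemma hpos: "h > 0" using hww w5 by (smt (verit) mult_pos_pos)

lemma a_inj: "inj_on a {0..w - 2}"
proof -
  have "card (a ` {0..w - 2}) = nat (w - 1)" using gol unfolding mod_golomb_ruler_def by simp
  moreover have "card {0..w - 2} = nat (w - 1)" by simp
  ultimately show ?thesis by (simp add: inj_on_iff_eq_card)
qed

lemma a_r: "s \<in> {0..w - 2} \<Longrightarrow> 0 \<le> a s \<and> a s < h"
  using a_range by force

lemma gol_diff:
  assumes "s1 \<in> {0..w - 2}" "s2 \<in> {0..w - 2}" "s3 \<in> {0..w - 2}" "s4 \<in> {0..w - 2}"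
    and "a s1 \<noteq> a s2" "a s3 \<noteq> a s4" "(a s1 - a s2) mod h = (a s3 - a s4) mod h"
  shows "a s1 = a s3 \<and> a s2 = a s4"
proof -
  have "\<forall>x\<in>a ` {0..w - 2}. \<forall>y\<in>a ` {0..w - 2}. \<forall>u\<in>a ` {0..w - 2}. \<forall>v\<in>a ` {0..w - 2}. x \<noteq> y \<longrightarrow> u \<noteq> v \<longrightarrow>
        ((x - y) mod h = (u - v) mod h \<longrightarrow> x = u \<and> y = v)"
    using gol unfolding mod_golomb_ruler_def by blast
  then show ?thesis using assms by blast
qed

lemma fA_eq:
  assumes "0 \<le> i" "i \<le> w - 2" "0 \<le> i'" "i' \<le> w - 2"
  shows "fA i j s = fA i' j' s' \<longleftrightarrow> (a s + j) mod h = (a s' + j') mod h \<and> i = i'"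
  unfolding fA_def using assms by (intro pos_inj) auto

lemma fB_eq:
  assumes "s \<in> {1..w - 1}" "s' \<in> {1..w - 1}"
  shows "fB i j s = fB i' j' s' \<longleftrightarrow> (s * i + j) mod h = (s' * i' + j') mod h \<and> s = s'"
proof -
  have "fB i j s = fB i' j' s' \<longleftrightarrow> (s * i + j) mod h = (s' * i' + j') mod h \<and> s - 1 = s' - 1"
    unfolding fB_def using assms by (intro pos_inj) auto
  then show ?thesis by auto
qed

lemma fAB_eq:
  assumes "0 \<le> i" "i \<le> w - 2" "s' \<in> {1..w - 1}"
  shows "fA i j s = fB i' j' s' \<longleftrightarrow> (a s + j) mod h = (s' * i' + j') mod h \<and> i = s' - 1"
  unfolding fA_def fB_def using assms by (intro pos_inj) auto

lemma fA_range:
  assumes "0 \<le> i" "i \<le> w - 2"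
  shows "fA i j ` {0..w - 2} \<subseteq> {0..<h * (w - 1)}"
proof
  fix p assume "p \<in> fA i j ` {0..w - 2}"
  then obtain s where p: "p = fA i j s" by auto
  have "0 \<le> (a s + j) mod h" "(a s + j) mod h < h" using hpos by auto
  then show "p \<in> {0..<h * (w - 1)}" using pos_range[of i "w - 1" "(a s + j) mod h" h] assms p
    unfolding fA_def by auto
qed

lemma fB_range: "fB i j ` {1..w - 1} \<subseteq> {0..<h * (w - 1)}"
proof
  fix p assume "p \<in> fB i j ` {1..w - 1}"
  then obtain s where p: "p = fB i j s" "s \<in> {1..w - 1}" by auto
  have "0 \<le> (s * i + j) mod h" "(s * i + j) mod h < h" using hpos by auto
  then show "p \<in> {0..<h * (w - 1)}" using pos_range[of "s - 1" "w - 1" "(s * i + j) mod h" h] p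
    unfolding fB_def by auto
qed

lemma fA_inj:
  assumes "0 \<le> i" "i \<le> w - 2"
  shows "inj_on (fA i j) {0..w - 2}"
proof
  fix s s' assume s: "s \<in> {0..w - 2}" "s' \<in> {0..w - 2}" and e: "fA i j s = fA i j s'"
  then have "(a s + j) mod h = (a s' + j) mod h" using fA_eq assms by blast
  then have "h dvd (a s - a s')" by (simp add: modeq_dvd)
  then have "a s mod h = a s' mod h" by (simp add: modeq_dvd)
  then have "a s = a s'" using a_r[OF s(1)] a_r[OF s(2)] by simp
  then show "s = s'" using a_inj s by (meson inj_onD)
qed

lemma fB_inj: "inj_on (fB i j) {1..w - 1}"
  by (rule inj_onI) (use fB_eq in blast)

end


context gsetup begin

lemma int_AA:
  assumes "0 \<le> i" "i \<le> t - 2" "0 \<le> i'" "i' \<le> t - 2" "0 \<le> j" "j \<le> h - 1" "0 \<le> j'" "j' \<le> h - 1"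
    and "(i, j) \<noteq> (i', j')"
  shows "card (fA i j ` {0..w - 2} \<inter> fA i' j' ` {0..w - 2}) \<le> 1"
proof -
  have ir: "0 \<le> i" "i \<le> w - 2" "0 \<le> i'" "i' \<le> w - 2" using assms tw by auto
  have "\<forall>p1\<in>fA i j ` {0..w - 2} \<inter> fA i' j' ` {0..w - 2}. \<forall>p2\<in>fA i j ` {0..w - 2} \<inter> fA i' j' ` {0..w - 2}. p1 = p2"
  proof (intro ballI)
    fix p1 p2 assume p1: "p1 \<in> fA i j ` {0..w - 2} \<inter> fA i' j' ` {0..w - 2}"
      and p2: "p2 \<in> fA i j ` {0..w - 2} \<inter> fA i' j' ` {0..w - 2}"
    obtain s1 s2 where s12: "s1 \<in> {0..w - 2}" "s2 \<in> {0..w - 2}" "p1 = fA i j s1" "p1 = fA i' j' s2"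
      using p1 by auto
    obtain s3 s4 where s34: "s3 \<in> {0..w - 2}" "s4 \<in> {0..w - 2}" "p2 = fA i j s3" "p2 = fA i' j' s4"
      using p2 by auto
    have "fA i j s1 = fA i' j' s2" using s12 by simp
    then have e1: "(a s1 + j) mod h = (a s2 + j') mod h" and ii: "i = i'"
      using fA_eq[OF ir, of j s1 j' s2] by simp_all
    have "fA i j s3 = fA i' j' s4" using s34 by simp
    then have e2: "(a s3 + j) mod h = (a s4 + j') mod h"
      using fA_eq[OF ir, of j s3 j' s4] by simp
    have jj: "j \<noteq> j'" using ii assms(9) by auto
    have jjm: "\<not> h dvd (j - j')"
    proof
      assume "h dvd (j - j')"
      then have "j mod h = j' mod h" by (simp add: modeq_dvd)
      then show False using jj assms(5-8) by simp
    qed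
    have d1: "h dvd (a s1 + j) - (a s2 + j')" using e1 by (simp add: modeq_dvd)
    have d2: "h dvd (a s3 + j) - (a s4 + j')" using e2 by (simp add: modeq_dvd)
    have n12: "a s1 \<noteq> a s2"
    proof
      assume "a s1 = a s2" then show False using d1 jjm by simp
    qed
    have n34: "a s3 \<noteq> a s4"
    proof
      assume "a s3 = a s4" then show False using d2 jjm by simp
    qed
    have "h dvd ((a s1 + j) - (a s2 + j')) - ((a s3 + j) - (a s4 + j'))" using d1 d2 by (rule dvd_diff)
    then have "h dvd (a s1 - a s2) - (a s3 - a s4)" by (simp add: algebra_simps)
    then have "(a s1 - a s2) mod h = (a s3 - a s4) mod h" by (simp add: modeq_dvd)
    then have "a s1 = a s3" using gol_diff[OF s12(1,2) s34(1,2) n12 n34] by blast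
    then show "p1 = p2" using s12 s34 by (simp add: fA_def)
  qed
  moreover have "finite (fA i j ` {0..w - 2} \<inter> fA i' j' ` {0..w - 2})" by simp
  ultimately have "card (fA i j ` {0..w - 2} \<inter> fA i' j' ` {0..w - 2}) \<le> Suc 0" using card_le_Suc0_iff_eq by blast
  then show ?thesis by simp
qed

lemma int_AB:
  assumes "0 \<le> i" "i \<le> t - 2"
  shows "card (fA i j ` {0..w - 2} \<inter> fB i' j' ` {1..w - 1}) \<le> 1"
proof -
  have ir: "0 \<le> i" "i \<le> w - 2" using assms tw by auto
  have "\<forall>p1\<in>fA i j ` {0..w - 2} \<inter> fB i' j' ` {1..w - 1}. \<forall>p2\<in>fA i j ` {0..w - 2} \<inter> fB i' j' ` {1..w - 1}. p1 = p2"
  proof (intro ballI)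
    fix p1 p2 assume p1: "p1 \<in> fA i j ` {0..w - 2} \<inter> fB i' j' ` {1..w - 1}"
      and p2: "p2 \<in> fA i j ` {0..w - 2} \<inter> fB i' j' ` {1..w - 1}"
    obtain s1 s2 where s12: "s1 \<in> {0..w - 2}" "s2 \<in> {1..w - 1}" "p1 = fA i j s1" "p1 = fB i' j' s2"
      using p1 by auto
    obtain s3 s4 where s34: "s3 \<in> {0..w - 2}" "s4 \<in> {1..w - 1}" "p2 = fA i j s3" "p2 = fB i' j' s4"
      using p2 by auto
    have "fA i j s1 = fB i' j' s2" using s12 by simp
    then have "i = s2 - 1" using fAB_eq[OF ir s12(2), of j s1 i' j'] by simp
    moreover have "fA i j s3 = fB i' j' s4" using s34 by simp
    then have "i = s4 - 1" using fAB_eq[OF ir s34(2), of j s3 i' j'] by simp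
    ultimately have "s2 = s4" by simp
    then show "p1 = p2" using s12 s34 by simp
  qed
  moreover have "finite (fA i j ` {0..w - 2} \<inter> fB i' j' ` {1..w - 1})" by simp
  ultimately have "card (fA i j ` {0..w - 2} \<inter> fB i' j' ` {1..w - 1}) \<le> Suc 0" using card_le_Suc0_iff_eq by blast
  then show ?thesis by simp
qed

lemma int_BB:
  assumes "0 \<le> i" "i \<le> w - t - 1" "0 \<le> i'" "i' \<le> w - t - 1" "0 \<le> j" "j \<le> h - 1" "0 \<le> j'" "j' \<le> h - 1"
    and "(i, j) \<noteq> (i', j')"
  shows "card (fB i j ` {1..w - 1} \<inter> fB i' j' ` {1..w - 1}) \<le> 1"
proof -
  have "\<forall>p1\<in>fB i j ` {1..w - 1} \<inter> fB i' j' ` {1..w - 1}. \<forall>p2\<in>fB i j ` {1..w - 1} \<inter> fB i' j' ` {1..w - 1}. p1 = p2"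
  proof (intro ballI)
    fix p1 p2 assume p1: "p1 \<in> fB i j ` {1..w - 1} \<inter> fB i' j' ` {1..w - 1}"
      and p2: "p2 \<in> fB i j ` {1..w - 1} \<inter> fB i' j' ` {1..w - 1}"
    obtain s1 s2 where s12: "s1 \<in> {1..w - 1}" "s2 \<in> {1..w - 1}" "p1 = fB i j s1" "p1 = fB i' j' s2"
      using p1 by auto
    obtain s3 s4 where s34: "s3 \<in> {1..w - 1}" "s4 \<in> {1..w - 1}" "p2 = fB i j s3" "p2 = fB i' j' s4"
      using p2 by auto
    have "fB i j s1 = fB i' j' s2" using s12 by simp
    then have cc: "(s1 * i + j) mod h = (s2 * i' + j') mod h \<and> s1 = s2"
      using iffD1[OF fB_eq[OF s12(1,2), of i j i' j']] by blast
    then have e1: "(s1 * i + j) mod h = (s1 * i' + j') mod h" by auto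
    have "fB i j s3 = fB i' j' s4" using s34 by simp
    then have cc: "(s3 * i + j) mod h = (s4 * i' + j') mod h \<and> s3 = s4"
      using iffD1[OF fB_eq[OF s34(1,2), of i j i' j']] by blast
    then have e2: "(s3 * i + j) mod h = (s3 * i' + j') mod h" by auto
    have d1: "h dvd (s1 * i + j) - (s1 * i' + j')" using e1 by (simp add: modeq_dvd)
    have d2: "h dvd (s3 * i + j) - (s3 * i' + j')" using e2 by (simp add: modeq_dvd)
    have ii: "i \<noteq> i'"
    proof
      assume "i = i'"
      then have "h dvd j - j'" using d1 by simp
      then have "j mod h = j' mod h" by (simp add: modeq_dvd)
      then have "j = j'" using assms(5-8) by simp
      then show False using \<open>i = i'\<close> assms(9) by simp
    qed
    have "h dvd ((s1 * i + j) - (s1 * i' + j')) - ((s3 * i + j) - (s3 * i' + j'))" using d1 d2 by (rule dvd_diff)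
    moreover have "((s1 * i + j) - (s1 * i' + j')) - ((s3 * i + j) - (s3 * i' + j')) = (s1 - s3) * (i - i')"
      by (simp add: algebra_simps)
    ultimately have dv: "h dvd (s1 - s3) * (i - i')" by simp
    have b1: "\<bar>s1 - s3\<bar> \<le> w" using s12 s34 by auto
    have b2: "\<bar>i - i'\<bar> \<le> w" using assms t2 by auto
    have "\<bar>(s1 - s3) * (i - i')\<bar> \<le> w * w"
      unfolding abs_mult using b1 b2 by (intro mult_mono) auto
    then have "\<bar>(s1 - s3) * (i - i')\<bar> < h" using hww by simp
    then have "(s1 - s3) * (i - i') = 0" using dv dvd_small_zero by blast
    then have "s1 = s3" using ii by simp
    then show "p1 = p2" using s12 s34 by simp
  qed
  moreover have "finite (fB i j ` {1..w - 1} \<inter> fB i' j' ` {1..w - 1})" by simp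
  ultimately have "card (fB i j ` {1..w - 1} \<inter> fB i' j' ` {1..w - 1}) \<le> Suc 0" using card_le_Suc0_iff_eq by blast
  then show ?thesis by simp
qed

lemma va_eq:
  assumes "0 \<le> i" "i \<le> w - 2"
  shows "vec_a (h * (w - 1)) w a i j = gvec (fA i j) {0..w - 2} (w - 2)"
proof -
  have pm: "(X * (w - 1) + i) mod (h * (w - 1)) = (X mod h) * (w - 1) + i" for X
    using pos_mod[of i "w - 1" h X] assms hpos by simp
  have st: "{((a s + j) * (w - 1) + i) mod (h * (w - 1)) | s. 0 \<le> s \<and> s \<le> w - 2} = fA i j ` {0..w - 2}"
    by (auto simp: fA_def pm)
  have tp: "((a (w - 2) + j) * (w - 1) + i) mod (h * (w - 1)) = fA i j (w - 2)"
    by (simp add: fA_def pm)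
  show ?thesis
    by (rule ext) (unfold vec_a_def gvec_def st tp, rule refl)
qed

lemma vb_eq:
  assumes "0 \<le> i" "i \<le> w - t - 1"
  shows "vec_b (h * (w - 1)) w t i j = gvec (fB i j) {1..w - 1} (t + i)"
proof -
  have pm: "(X * (w - 1) + s - 1) mod (h * (w - 1)) = (X mod h) * (w - 1) + (s - 1)"
    if "1 \<le> s" "s \<le> w - 1" for X s
    using pos_mod[of "s - 1" "w - 1" h X] that hpos by (simp add: algebra_simps)
  have pm2: "(X * (w - 1) + (t + i - 1)) mod (h * (w - 1)) = (X mod h) * (w - 1) + (t + i - 1)" for X
    using pos_mod[of "t + i - 1" "w - 1" h X] assms t2 hpos by simp
  have st: "{((s * i + j) * (w - 1) + s - 1) mod (h * (w - 1)) | s. 1 \<le> s \<and> s \<le> w - 1} = fB i j ` {1..w - 1}"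
  proof (intro equalityI subsetI)
    fix p assume "p \<in> {((s * i + j) * (w - 1) + s - 1) mod (h * (w - 1)) | s. 1 \<le> s \<and> s \<le> w - 1}"
    then obtain s where s: "p = ((s * i + j) * (w - 1) + s - 1) mod (h * (w - 1))" "1 \<le> s" "s \<le> w - 1" by blast
    then have "p = fB i j s" using pm[OF s(2,3), of "s * i + j"] by (simp add: fB_def)
    then show "p \<in> fB i j ` {1..w - 1}" using s by auto
  next
    fix p assume "p \<in> fB i j ` {1..w - 1}"
    then obtain s where s: "1 \<le> s" "s \<le> w - 1" "p = fB i j s" by auto
    then have "p = ((s * i + j) * (w - 1) + s - 1) mod (h * (w - 1))" using pm[OF s(1,2), of "s * i + j"] by (simp add: fB_def)
    then show "p \<in> {((s * i + j) * (w - 1) + s - 1) mod (h * (w - 1)) | s. 1 \<le> s \<and> s \<le> w - 1}" using s by blast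
  qed
  have tp: "(((t + i) * i + j) * (w - 1) + (t + i - 1)) mod (h * (w - 1)) = fB i j (t + i)"
    by (simp add: fB_def pm2)
  show ?thesis
    by (rule ext) (unfold vec_b_def gvec_def st tp, rule refl)
qed

lemma tp_AA:
  assumes "0 \<le> i" "i \<le> t - 2" "0 \<le> i'" "i' \<le> t - 2" "0 \<le> j" "j \<le> h - 1" "0 \<le> j'" "j' \<le> h - 1"
    and "(i, j) \<noteq> (i', j')"
  shows "fA i j (w - 2) \<noteq> fA i' j' (w - 2)"
proof
  assume e: "fA i j (w - 2) = fA i' j' (w - 2)"
  have ir: "0 \<le> i" "i \<le> w - 2" "0 \<le> i'" "i' \<le> w - 2" using assms tw by auto
  have "i = i'" "(a (w - 2) + j) mod h = (a (w - 2) + j') mod h" using e fA_eq[OF ir, of j "w - 2" j' "w - 2"] by simp_all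
  moreover from this(2) have "h dvd j - j'" by (simp add: modeq_dvd)
  then have "j mod h = j' mod h" by (simp add: modeq_dvd)
  then have "j = j'" using assms(5-8) by simp
  ultimately show False using assms(9) by simp
qed

lemma tp_AB:
  assumes "0 \<le> i" "i \<le> t - 2" "0 \<le> i'" "i' \<le> w - t - 1"
  shows "fA i j (w - 2) \<noteq> fB i' j' (t + i')"
proof
  assume e: "fA i j (w - 2) = fB i' j' (t + i')"
  have ir: "0 \<le> i" "i \<le> w - 2" using assms tw by auto
  have "t + i' \<in> {1..w - 1}" using assms t2 by auto
  then have "i = t + i' - 1" using e fAB_eq[OF ir _, of "t + i'" j "w - 2" i' j'] by simp
  then show False using assms by simp
qed

lemma tp_BB:
  assumes "0 \<le> i" "i \<le> w - t - 1" "0 \<le> i'" "i' \<le> w - t - 1" "0 \<le> j" "j \<le> h - 1" "0 \<le> j'" "j' \<le> h - 1"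
    and "(i, j) \<noteq> (i', j')"
  shows "fB i j (t + i) \<noteq> fB i' j' (t + i')"
proof
  assume e: "fB i j (t + i) = fB i' j' (t + i')"
  have "t + i \<in> {1..w - 1}" "t + i' \<in> {1..w - 1}" using assms t2 by auto
  then have cc: "((t + i) * i + j) mod h = ((t + i') * i' + j') mod h \<and> t + i = t + i'"
    using e iffD1[OF fB_eq[of "t + i" "t + i'" i j i' j']] by blast
  then have "t + i = t + i'" "((t + i) * i + j) mod h = ((t + i') * i' + j') mod h" by blast+
  moreover from this have "i = i'" by simp
  moreover from calculation have "h dvd j - j'" by (simp add: modeq_dvd)
  then have "j mod h = j' mod h" by (simp add: modeq_dvd)
  then have "j = j'" using assms(5-8) by simp
  ultimately show False using assms(9) by simp
qed

end



lemma l1_sym: "l1_dist n u v = l1_dist n v u"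
  unfolding l1_dist_def by (simp add: abs_minus_commute)

lemma gvec_twopos: "gvec f S s0 = gvec g T t0 \<Longrightarrow> f s0 = g t0"
proof -
  assume e: "gvec f S s0 = gvec g T t0"
  have "gvec g T t0 (f s0) = 2" using e by (metis gvec_def)
  then show ?thesis unfolding gvec_def by (auto split: if_splits)
qed

context gsetup begin

definition IA :: "(int \<times> int) set" where "IA = {0..t - 2} \<times> {0..h - 1}"
definition IB :: "(int \<times> int) set" where "IB = {0..w - t - 1} \<times> {0..h - 1}"
definition VA :: "int \<times> int \<Rightarrow> int \<Rightarrow> int" where "VA q = vec_a (h * (w - 1)) w a (fst q) (snd q)"
definition VB :: "int \<times> int \<Rightarrow> int \<Rightarrow> int" where "VB q = vec_b (h * (w - 1)) w t (fst q) (snd q)"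
definition HH :: "(int \<Rightarrow> int) set" where "HH = VA ` IA \<union> VB ` IB"

lemma card_SA: "int (card {0..w - 2}) = w - 1" using w5 by simp
lemma card_SB: "int (card {1..w - 1}) = w - 1" using w5 by simp

lemma VA_g: "q \<in> IA \<Longrightarrow> VA q = gvec (fA (fst q) (snd q)) {0..w - 2} (w - 2)"
  unfolding VA_def IA_def using tw by (intro va_eq) auto

lemma VB_g: "q \<in> IB \<Longrightarrow> VB q = gvec (fB (fst q) (snd q)) {1..w - 1} (t + fst q)"
  unfolding VB_def IB_def by (intro vb_eq) auto

lemma IA_r: "q \<in> IA \<Longrightarrow> 0 \<le> fst q \<and> fst q \<le> t - 2 \<and> 0 \<le> snd q \<and> snd q \<le> h - 1"
  unfolding IA_def by auto
lemma IB_r: "q \<in> IB \<Longrightarrow> 0 \<le> fst q \<and> fst q \<le> w - t - 1 \<and> 0 \<le> snd q \<and> snd q \<le> h - 1"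
  unfolding IB_def by auto

lemma HH_eqA: "{vec_a (h * (w - 1)) w a i j | i j. 0 \<le> i \<and> i \<le> t - 2 \<and> 0 \<le> j \<and> j \<le> h - 1} = VA ` IA"
proof (intro equalityI subsetI)
  fix c assume "c \<in> {vec_a (h * (w - 1)) w a i j | i j. 0 \<le> i \<and> i \<le> t - 2 \<and> 0 \<le> j \<and> j \<le> h - 1}"
  then obtain i j where "c = vec_a (h * (w - 1)) w a i j" "0 \<le> i \<and> i \<le> t - 2 \<and> 0 \<le> j \<and> j \<le> h - 1" by blast
  then have "(i, j) \<in> IA" "c = VA (i, j)" unfolding IA_def VA_def by auto
  then show "c \<in> VA ` IA" by blast
next
  fix c assume "c \<in> VA ` IA"
  then obtain i j where "(i, j) \<in> IA" "c = VA (i, j)" by auto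
  then show "c \<in> {vec_a (h * (w - 1)) w a i j | i j. 0 \<le> i \<and> i \<le> t - 2 \<and> 0 \<le> j \<and> j \<le> h - 1}"
    unfolding IA_def VA_def by auto
qed

lemma HH_eqB: "{vec_b (h * (w - 1)) w t i j | i j. 0 \<le> i \<and> i \<le> w - t - 1 \<and> 0 \<le> j \<and> j \<le> h - 1} = VB ` IB"
proof (intro equalityI subsetI)
  fix c assume "c \<in> {vec_b (h * (w - 1)) w t i j | i j. 0 \<le> i \<and> i \<le> w - t - 1 \<and> 0 \<le> j \<and> j \<le> h - 1}"
  then obtain i j where "c = vec_b (h * (w - 1)) w t i j" "0 \<le> i \<and> i \<le> w - t - 1 \<and> 0 \<le> j \<and> j \<le> h - 1" by blast
  then have "(i, j) \<in> IB" "c = VB (i, j)" unfolding IB_def VB_def by auto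
  then show "c \<in> VB ` IB" by blast
next
  fix c assume "c \<in> VB ` IB"
  then obtain i j where "(i, j) \<in> IB" "c = VB (i, j)" by auto
  then show "c \<in> {vec_b (h * (w - 1)) w t i j | i j. 0 \<le> i \<and> i \<le> w - t - 1 \<and> 0 \<le> j \<and> j \<le> h - 1}"
    unfolding IB_def VB_def by auto
qed

lemma HH_eq:
  "{vec_a (h * (w - 1)) w a i j | i j. 0 \<le> i \<and> i \<le> t - 2 \<and> 0 \<le> j \<and> j \<le> h - 1}
   \<union> {vec_b (h * (w - 1)) w t i j | i j. 0 \<le> i \<and> i \<le> w - t - 1 \<and> 0 \<le> j \<and> j \<le> h - 1} = HH"
  unfolding HH_def HH_eqA HH_eqB ..

lemma A_props:
  assumes "q \<in> IA"
  shows "fA (fst q) (snd q) ` {0..w - 2} \<subseteq> {0..<h * (w - 1)}" "w - 2 \<in> {0..w - 2}" "finite {0..w - 2}"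
    "inj_on (fA (fst q) (snd q)) {0..w - 2}"
proof -
  have r: "0 \<le> fst q" "fst q \<le> w - 2" using IA_r[OF assms] tw by auto
  show "fA (fst q) (snd q) ` {0..w - 2} \<subseteq> {0..<h * (w - 1)}" by (rule fA_range[OF r])
  show "inj_on (fA (fst q) (snd q)) {0..w - 2}" by (rule fA_inj[OF r])
  show "w - 2 \<in> {0..w - 2}" "finite {0..w - 2}" using w5 by auto
qed

lemma B_props:
  assumes "q \<in> IB"
  shows "fB (fst q) (snd q) ` {1..w - 1} \<subseteq> {0..<h * (w - 1)}" "t + fst q \<in> {1..w - 1}" "finite {1..w - 1}"
    "inj_on (fB (fst q) (snd q)) {1..w - 1}"
proof -
  show "fB (fst q) (snd q) ` {1..w - 1} \<subseteq> {0..<h * (w - 1)}" by (rule fB_range)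
  show "inj_on (fB (fst q) (snd q)) {1..w - 1}" by (rule fB_inj)
  show "t + fst q \<in> {1..w - 1}" "finite {1..w - 1}" using IB_r[OF assms] t2 by auto
qed

lemma code: "ternary_code (h * (w - 1)) (2 * w - 2) w HH"
  unfolding ternary_code_def
proof (intro conjI ballI impI allI)
  fix c p assume "c \<in> HH"
  then consider q where "q \<in> IA" "c = VA q" | q where "q \<in> IB" "c = VB q" unfolding HH_def by auto
  then show "c p \<in> {0, 1, 2}" by cases (auto simp: VA_g VB_g gvec_vals simp del: insert_iff)
next
  fix c p assume "c \<in> HH" "p \<notin> {0..<h * (w - 1)}"
  then consider q where "q \<in> IA" "c = VA q" | q where "q \<in> IB" "c = VB q" unfolding HH_def by auto
  then show "c p = 0"
  proof cases
    case 1 then show ?thesis using gvec_out[OF A_props(1,2)] \<open>p \<notin> _\<close> VA_g by simp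
  next
    case 2 then show ?thesis using gvec_out[OF B_props(1,2)] \<open>p \<notin> _\<close> VB_g by simp
  qed
next
  fix c assume "c \<in> HH"
  then consider q where "q \<in> IA" "c = VA q" | q where "q \<in> IB" "c = VB q" unfolding HH_def by auto
  then show "l1_weight (h * (w - 1)) c = w"
  proof cases
    case 1 then show ?thesis using gvec_weight[OF A_props] VA_g card_SA by simp
  next
    case 2 then show ?thesis using gvec_weight[OF B_props] VB_g card_SB by simp
  qed
next
  fix c c' assume c: "c \<in> HH" and c': "c' \<in> HH" and ne: "c \<noteq> c'"
  have AA: "l1_dist (h * (w - 1)) (VA q) (VA q') \<ge> 2 * w - 2" if "q \<in> IA" "q' \<in> IA" "q \<noteq> q'" for q q'
  proof -
    have "int (card {0..w - 2}) + int (card {0..w - 2}) \<le> l1_dist (h * (w - 1)) (VA q) (VA q')"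
      unfolding VA_g[OF that(1)] VA_g[OF that(2)]
      by (rule gvec_dist[OF A_props[OF that(1)] A_props[OF that(2)]])
        (use IA_r[OF that(1)] IA_r[OF that(2)] that(3) int_AA[of "fst q" "fst q'" "snd q" "snd q'"]
           tp_AA[of "fst q" "fst q'" "snd q" "snd q'"] in \<open>simp_all add: prod_eq_iff\<close>)
    then show ?thesis using card_SA by simp
  qed
  have BB: "l1_dist (h * (w - 1)) (VB q) (VB q') \<ge> 2 * w - 2" if "q \<in> IB" "q' \<in> IB" "q \<noteq> q'" for q q'
  proof -
    have "int (card {1..w - 1}) + int (card {1..w - 1}) \<le> l1_dist (h * (w - 1)) (VB q) (VB q')"
      unfolding VB_g[OF that(1)] VB_g[OF that(2)]
      by (rule gvec_dist[OF B_props[OF that(1)] B_props[OF that(2)]])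
        (use IB_r[OF that(1)] IB_r[OF that(2)] that(3) int_BB[of "fst q" "fst q'" "snd q" "snd q'"]
           tp_BB[of "fst q" "fst q'" "snd q" "snd q'"] in \<open>simp_all add: prod_eq_iff\<close>)
    then show ?thesis using card_SB by simp
  qed
  have AB: "l1_dist (h * (w - 1)) (VA q) (VB q') \<ge> 2 * w - 2" if "q \<in> IA" "q' \<in> IB" for q q'
  proof -
    have "int (card {0..w - 2}) + int (card {1..w - 1}) \<le> l1_dist (h * (w - 1)) (VA q) (VB q')"
      unfolding VA_g[OF that(1)] VB_g[OF that(2)]
      by (rule gvec_dist[OF A_props[OF that(1)] B_props[OF that(2)]])
        (use IA_r[OF that(1)] IB_r[OF that(2)] int_AB[of "fst q" "snd q" "fst q'" "snd q'"]
           tp_AB[of "fst q" "fst q'" "snd q" "snd q'"] in simp_all)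
    then show ?thesis using card_SA card_SB by simp
  qed
  show "2 * w - 2 \<le> l1_dist (h * (w - 1)) c c'"
    using c c' ne unfolding HH_def
    by (auto intro: AA BB AB simp: l1_sym[of _ "VB _"])
qed

end



lemma img_iff: "(y \<in> f ` A) = (\<exists>x\<in>A. f x = y)" by auto

context gsetup begin

lemma modshift:
  fixes c j x :: int
  assumes "0 \<le> x" "x < h" "0 \<le> j" "j < h"
  shows "(c + j) mod h = x \<longleftrightarrow> j = (x - c) mod h"
proof -
  have "(c + j) mod h = x mod h \<longleftrightarrow> j mod h = (x - c) mod h"
  proof -
    have e: "c + j - x = j - (x - c)" by simp
    have "h dvd (c + j - x) \<longleftrightarrow> h dvd (j - (x - c))" by (simp only: e)
    then show ?thesis by (simp add: modeq_dvd)
  qed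
  then show ?thesis using assms by simp
qed

lemma finite_IA: "finite IA" unfolding IA_def by simp
lemma finite_IB: "finite IB" unfolding IB_def by simp

lemma VA_inj: "inj_on VA IA"
proof
  fix q q' assume q: "q \<in> IA" "q' \<in> IA" and e: "VA q = VA q'"
  show "q = q'"
  proof (rule ccontr)
    assume ne: "q \<noteq> q'"
    have "fA (fst q) (snd q) (w - 2) = fA (fst q') (snd q') (w - 2)"
      using e VA_g[OF q(1)] VA_g[OF q(2)] gvec_twopos by metis
    then show False using tp_AA[of "fst q" "fst q'" "snd q" "snd q'"] IA_r[OF q(1)] IA_r[OF q(2)] ne
      by (simp add: prod_eq_iff)
  qed
qed

lemma VB_inj: "inj_on VB IB"
proof
  fix q q' assume q: "q \<in> IB" "q' \<in> IB" and e: "VB q = VB q'"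
  show "q = q'"
  proof (rule ccontr)
    assume ne: "q \<noteq> q'"
    have "fB (fst q) (snd q) (t + fst q) = fB (fst q') (snd q') (t + fst q')"
      using e VB_g[OF q(1)] VB_g[OF q(2)] gvec_twopos by metis
    then show False using tp_BB[of "fst q" "fst q'" "snd q" "snd q'"] IB_r[OF q(1)] IB_r[OF q(2)] ne
      by (simp add: prod_eq_iff)
  qed
qed

lemma VAB_ne: "q \<in> IA \<Longrightarrow> q' \<in> IB \<Longrightarrow> VA q \<noteq> VB q'"
proof
  assume q: "q \<in> IA" "q' \<in> IB" and e: "VA q = VB q'"
  have "fA (fst q) (snd q) (w - 2) = fB (fst q') (snd q') (t + fst q')"
    using e VA_g[OF q(1)] VB_g[OF q(2)] gvec_twopos by metis
  then show False using tp_AB[of "fst q" "fst q'" "snd q" "snd q'"] IA_r[OF q(1)] IB_r[OF q(2)] by simp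
qed

lemma supp_VA: "q \<in> IA \<Longrightarrow> supp_vec (h * (w - 1)) (VA q) = fA (fst q) (snd q) ` {0..w - 2}"
  using VA_g gvec_supp[OF A_props(1,2)] by simp

lemma supp_VB: "q \<in> IB \<Longrightarrow> supp_vec (h * (w - 1)) (VB q) = fB (fst q) (snd q) ` {1..w - 1}"
  using VB_g gvec_supp[OF B_props(1,2)] by simp

lemma deg_split:
  "card {c \<in> HH. v \<in> supp_vec (h * (w - 1)) c} =
     card {q \<in> IA. v \<in> fA (fst q) (snd q) ` {0..w - 2}} + card {q \<in> IB. v \<in> fB (fst q) (snd q) ` {1..w - 1}}"
proof -
  let ?X = "{q \<in> IA. v \<in> fA (fst q) (snd q) ` {0..w - 2}}"
  let ?Y = "{q \<in> IB. v \<in> fB (fst q) (snd q) ` {1..w - 1}}"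
  have eq: "{c \<in> HH. v \<in> supp_vec (h * (w - 1)) c} = VA ` ?X \<union> VB ` ?Y"
    unfolding HH_def using supp_VA supp_VB by auto
  have fX: "finite ?X" using finite_IA by simp
  have fY: "finite ?Y" using finite_IB by simp
  have dj: "VA ` ?X \<inter> VB ` ?Y = {}" using VAB_ne by blast
  have cX: "card (VA ` ?X) = card ?X" by (rule card_image, rule inj_on_subset[OF VA_inj]) auto
  have cY: "card (VB ` ?Y) = card ?Y" by (rule card_image, rule inj_on_subset[OF VB_inj]) auto
  show ?thesis unfolding eq using card_Un_disjoint[OF _ _ dj] fX fY cX cY by simp
qed

lemma decomp:
  assumes "v \<in> {0..<h * (w - 1)}"
  shows "v = (v div (w - 1)) * (w - 1) + v mod (w - 1)" "0 \<le> v div (w - 1)" "v div (w - 1) < h"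
    "0 \<le> v mod (w - 1)" "v mod (w - 1) < w - 1"
proof -
  show "v = (v div (w - 1)) * (w - 1) + v mod (w - 1)" by (rule div_mult_mod_eq[symmetric])
  show "0 \<le> v div (w - 1)" using assms w5 by (simp add: pos_imp_zdiv_nonneg_iff)
  show "0 \<le> v mod (w - 1)" "v mod (w - 1) < w - 1" using w5 by auto
  show "v div (w - 1) < h"
  proof (rule ccontr)
    assume "\<not> v div (w - 1) < h"
    then have "h * (w - 1) \<le> (v div (w - 1)) * (w - 1)" using w5 by (intro mult_right_mono) auto
    moreover have "(v div (w - 1)) * (w - 1) \<le> v" using w5
      by (metis \<open>v = v div (w - 1) * (w - 1) + v mod (w - 1)\<close> \<open>0 \<le> v mod (w - 1)\<close> le_add_same_cancel1)
    ultimately show False using assms by simp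
  qed
qed

lemma IAv:
  assumes "0 \<le> x" "x < h" "0 \<le> r" "r < w - 1"
  shows "{q \<in> IA. x * (w - 1) + r \<in> fA (fst q) (snd q) ` {0..w - 2}} =
         (if r \<le> t - 2 then (\<lambda>s. (r, (x - a s) mod h)) ` {0..w - 2} else {})"
proof -
  have mem: "x * (w - 1) + r \<in> fA i j ` {0..w - 2} \<longleftrightarrow> i = r \<and> (\<exists>s\<in>{0..w - 2}. (a s + j) mod h = x)"
    if "0 \<le> i" "i \<le> w - 2" for i j
  proof -
    have iff: "fA i j s = x * (w - 1) + r \<longleftrightarrow> (a s + j) mod h = x \<and> i = r" for s
      unfolding fA_def using that assms by (intro pos_inj) auto
    have "x * (w - 1) + r \<in> fA i j ` {0..w - 2} \<longleftrightarrow> (\<exists>s\<in>{0..w - 2}. fA i j s = x * (w - 1) + r)" by (rule img_iff)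
    also have "\<dots> \<longleftrightarrow> (\<exists>s\<in>{0..w - 2}. (a s + j) mod h = x \<and> i = r)" using iff by simp
    finally show ?thesis by blast
  qed
  show ?thesis
  proof (intro equalityI subsetI)
    fix q assume "q \<in> {q \<in> IA. x * (w - 1) + r \<in> fA (fst q) (snd q) ` {0..w - 2}}"
    then have q: "q \<in> IA" "x * (w - 1) + r \<in> fA (fst q) (snd q) ` {0..w - 2}" by auto
    have ir: "0 \<le> fst q" "fst q \<le> w - 2" "0 \<le> snd q" "snd q < h" using IA_r[OF q(1)] tw by auto
    obtain s where s: "s \<in> {0..w - 2}" "(a s + snd q) mod h = x" "fst q = r" using mem[OF ir(1,2)] q(2) by blast
    have "snd q = (x - a s) mod h" using modshift[OF assms(1,2) ir(3,4)] s(2) by simp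
    then have "q = (r, (x - a s) mod h)" using s(3) by (simp add: prod_eq_iff)
    moreover have "r \<le> t - 2" using s(3) IA_r[OF q(1)] by simp
    ultimately show "q \<in> (if r \<le> t - 2 then (\<lambda>s. (r, (x - a s) mod h)) ` {0..w - 2} else {})"
      using s(1) by auto
  next
    fix q assume "q \<in> (if r \<le> t - 2 then (\<lambda>s. (r, (x - a s) mod h)) ` {0..w - 2} else {})"
    then obtain s where s: "r \<le> t - 2" "s \<in> {0..w - 2}" "q = (r, (x - a s) mod h)"
      by (auto split: if_splits)
    have j: "0 \<le> (x - a s) mod h" "(x - a s) mod h < h" using hpos by auto
    have qa: "q \<in> IA" unfolding IA_def using s j assms by auto
    have "(a s + (x - a s) mod h) mod h = x" using modshift[OF assms(1,2) j] by simp
    then have "x * (w - 1) + r \<in> fA (fst q) (snd q) ` {0..w - 2}"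
      using mem[of r "(x - a s) mod h"] s assms tw by auto
    then show "q \<in> {q \<in> IA. x * (w - 1) + r \<in> fA (fst q) (snd q) ` {0..w - 2}}" using qa by simp
  qed
qed

lemma IBv:
  assumes "0 \<le> x" "x < h" "0 \<le> r" "r < w - 1"
  shows "{q \<in> IB. x * (w - 1) + r \<in> fB (fst q) (snd q) ` {1..w - 1}} =
         (\<lambda>i. (i, (x - (r + 1) * i) mod h)) ` {0..w - t - 1}"
proof -
  have mem: "x * (w - 1) + r \<in> fB i j ` {1..w - 1} \<longleftrightarrow> ((r + 1) * i + j) mod h = x" for i j
  proof -
    have base: "fB i j s = x * (w - 1) + r \<longleftrightarrow> (s * i + j) mod h = x \<and> s - 1 = r" if "s \<in> {1..w - 1}" for s
      unfolding fB_def using that assms by (intro pos_inj) auto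
    have r1: "r + 1 \<in> {1..w - 1}" using assms by auto
    have "x * (w - 1) + r \<in> fB i j ` {1..w - 1} \<longleftrightarrow> (\<exists>s\<in>{1..w - 1}. fB i j s = x * (w - 1) + r)" by (rule img_iff)
    also have "\<dots> \<longleftrightarrow> ((r + 1) * i + j) mod h = x"
    proof
      assume "\<exists>s\<in>{1..w - 1}. fB i j s = x * (w - 1) + r"
      then obtain s where s: "s \<in> {1..w - 1}" "fB i j s = x * (w - 1) + r" by blast
      then have "(s * i + j) mod h = x" "s - 1 = r" using base[OF s(1)] by simp_all
      then show "((r + 1) * i + j) mod h = x" by (simp add: algebra_simps)
    next
      assume "((r + 1) * i + j) mod h = x"
      then have "fB i j (r + 1) = x * (w - 1) + r" using base[OF r1] by simp
      then show "\<exists>s\<in>{1..w - 1}. fB i j s = x * (w - 1) + r" using r1 by blast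
    qed
    finally show ?thesis .
  qed
  show ?thesis
  proof (intro equalityI subsetI)
    fix q assume "q \<in> {q \<in> IB. x * (w - 1) + r \<in> fB (fst q) (snd q) ` {1..w - 1}}"
    then have q: "q \<in> IB" "((r + 1) * fst q + snd q) mod h = x" using mem by auto
    have ir: "0 \<le> snd q" "snd q < h" using IB_r[OF q(1)] by auto
    have "snd q = (x - (r + 1) * fst q) mod h" using modshift[OF assms(1,2) ir] q(2) by simp
    then have "q = (fst q, (x - (r + 1) * fst q) mod h)" by (simp add: prod_eq_iff)
    moreover have "fst q \<in> {0..w - t - 1}" using IB_r[OF q(1)] by simp
    ultimately show "q \<in> (\<lambda>i. (i, (x - (r + 1) * i) mod h)) ` {0..w - t - 1}" by blast
  next
    fix q assume "q \<in> (\<lambda>i. (i, (x - (r + 1) * i) mod h)) ` {0..w - t - 1}"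
    then obtain i where i: "i \<in> {0..w - t - 1}" "q = (i, (x - (r + 1) * i) mod h)" by auto
    have j: "0 \<le> (x - (r + 1) * i) mod h" "(x - (r + 1) * i) mod h < h" using hpos by auto
    have qb: "q \<in> IB" unfolding IB_def using i j by auto
    have "((r + 1) * i + (x - (r + 1) * i) mod h) mod h = x" using modshift[OF assms(1,2) j] by simp
    then show "q \<in> {q \<in> IB. x * (w - 1) + r \<in> fB (fst q) (snd q) ` {1..w - 1}}" using qb mem i by simp
  qed
qed

lemma deg_formula:
  assumes v: "v \<in> {0..<h * (w - 1)}"
  shows "card {c \<in> HH. v \<in> supp_vec (h * (w - 1)) c} =
           (if v mod (w - 1) \<le> t - 2 then nat (w - 1) else 0) + nat (w - t)"
proof -
  define x where "x = v div (w - 1)"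
  define r where "r = v mod (w - 1)"
  have d: "v = x * (w - 1) + r" "0 \<le> x" "x < h" "0 \<le> r" "r < w - 1"
    using decomp[OF v] unfolding x_def r_def by auto
  have cA: "card {q \<in> IA. v \<in> fA (fst q) (snd q) ` {0..w - 2}} = (if r \<le> t - 2 then nat (w - 1) else 0)"
  proof (cases "r \<le> t - 2")
    case True
    have inj: "inj_on (\<lambda>s. (r, (x - a s) mod h)) {0..w - 2}"
    proof
      fix s s' assume s: "s \<in> {0..w - 2}" "s' \<in> {0..w - 2}" and e: "(r, (x - a s) mod h) = (r, (x - a s') mod h)"
      then have "h dvd (x - a s) - (x - a s')" by (simp add: modeq_dvd)
      then have "h dvd a s - a s'" by (metis dvd_minus_iff minus_diff_eq diff_diff_eq2 diff_diff_cancel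
            add_diff_cancel_left' diff_add_cancel)
      then have "a s mod h = a s' mod h" by (simp add: modeq_dvd)
      then have "a s = a s'" using a_r[OF s(1)] a_r[OF s(2)] by simp
      then show "s = s'" using a_inj s by (meson inj_onD)
    qed
    have "card ((\<lambda>s. (r, (x - a s) mod h)) ` {0..w - 2}) = nat (w - 1)"
      using card_image[OF inj] w5 by simp
    then show ?thesis using IAv[OF d(2-5)] True d(1) by simp
  next
    case False
    then show ?thesis unfolding d(1) IAv[OF d(2-5)] by simp
  qed
  have cB: "card {q \<in> IB. v \<in> fB (fst q) (snd q) ` {1..w - 1}} = nat (w - t)"
  proof -
    have inj: "inj_on (\<lambda>i. (i, (x - (r + 1) * i) mod h)) {0..w - t - 1}" by (rule inj_onI) simp
    show ?thesis using IBv[OF d(2-5)] d(1) card_image[OF inj] by simp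
  qed
  show ?thesis using deg_split cA cB r_def by simp
qed

lemma count_lemma:
  "card {v \<in> {0..<h * (w - 1)}. card {c \<in> HH. v \<in> supp_vec (h * (w - 1)) c} = nat (w - t)} = nat (h * (w - t))"
proof -
  have "{v \<in> {0..<h * (w - 1)}. card {c \<in> HH. v \<in> supp_vec (h * (w - 1)) c} = nat (w - t)}
      = {v \<in> {0..<h * (w - 1)}. \<not> v mod (w - 1) \<le> t - 2}"
    using deg_formula w5 by auto
  also have "\<dots> = (\<lambda>(x, r). x * (w - 1) + r) ` ({0..<h} \<times> {t - 1..<w - 1})"
  proof (intro equalityI subsetI)
    fix v assume "v \<in> {v \<in> {0..<h * (w - 1)}. \<not> v mod (w - 1) \<le> t - 2}"
    then have v: "v \<in> {0..<h * (w - 1)}" "\<not> v mod (w - 1) \<le> t - 2" by auto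
    have "(v div (w - 1), v mod (w - 1)) \<in> {0..<h} \<times> {t - 1..<w - 1}" using decomp[OF v(1)] v(2) by auto
    moreover have "v = (\<lambda>(x, r). x * (w - 1) + r) (v div (w - 1), v mod (w - 1))" using decomp[OF v(1)] by simp
    ultimately show "v \<in> (\<lambda>(x, r). x * (w - 1) + r) ` ({0..<h} \<times> {t - 1..<w - 1})" by blast
  next
    fix v assume "v \<in> (\<lambda>(x, r). x * (w - 1) + r) ` ({0..<h} \<times> {t - 1..<w - 1})"
    then obtain x r where xr: "v = x * (w - 1) + r" "0 \<le> x" "x < h" "t - 1 \<le> r" "r < w - 1" by auto
    have "0 \<le> r" using xr t2 by simp
    then have "0 \<le> v \<and> v < h * (w - 1)" using pos_range[of r "w - 1" x h] xr by simp
    moreover have "v mod (w - 1) = r" using xr \<open>0 \<le> r\<close> by simp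
    ultimately show "v \<in> {v \<in> {0..<h * (w - 1)}. \<not> v mod (w - 1) \<le> t - 2}" using xr by auto
  qed
  also have "card \<dots> = card ({0..<h} \<times> {t - 1..<w - 1})"
  proof (rule card_image, rule inj_onI)
    fix p p' assume "p \<in> {0..<h} \<times> {t - 1..<w - 1}" "p' \<in> {0..<h} \<times> {t - 1..<w - 1}"
      and e: "(\<lambda>(x, r). x * (w - 1) + r) p = (\<lambda>(x, r). x * (w - 1) + r) p'"
    then have r: "0 \<le> snd p" "snd p < w - 1" "0 \<le> snd p'" "snd p' < w - 1" using t2 by auto
    have "fst p * (w - 1) + snd p = fst p' * (w - 1) + snd p'" using e by (simp add: case_prod_beta)
    then have "fst p = fst p' \<and> snd p = snd p'" using pos_inj[OF r] by blast
    then show "p = p'" by (simp add: prod_eq_iff)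
  qed
  also have "\<dots> = nat h * nat (w - t)" by (simp add: card_cartesian_product)
  also have "\<dots> = nat (h * (w - t))" using hpos by (simp add: nat_mult_distrib)
  finally show ?thesis .
qed

lemma rest_lemma:
  "\<forall>v\<in>{0..<h * (w - 1)}. card {c \<in> HH. v \<in> supp_vec (h * (w - 1)) c} \<noteq> nat (w - t) \<longrightarrow>
      card {c \<in> HH. v \<in> supp_vec (h * (w - 1)) c} = nat (2 * w - t - 1)"
proof (intro ballI impI)
  fix v assume v: "v \<in> {0..<h * (w - 1)}" and ne: "card {c \<in> HH. v \<in> supp_vec (h * (w - 1)) c} \<noteq> nat (w - t)"
  then have "v mod (w - 1) \<le> t - 2" using deg_formula[OF v] by (auto split: if_splits)
  then show "card {c \<in> HH. v \<in> supp_vec (h * (w - 1)) c} = nat (2 * w - t - 1)"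
    using deg_formula[OF v] w5 tw by simp
qed

end

theorem proposition1:
  fixes w t h :: int and a :: "int \<Rightarrow> int"
  assumes "w \<ge> 5" and "2 \<le> t" and "t \<le> w - 2" and "h > 2 * w ^ 3"
    and "mod_golomb_ruler h (w - 1) (a ` {0..w - 2})"
    and "a 0 = 0"
    and "\<forall>s\<in>{0..w - 2}. 0 \<le> a s \<and> a s \<le> h - 1"
  shows "let n' = h * (w - 1);
             H = {vec_a n' w a i j | i j. 0 \<le> i \<and> i \<le> t - 2 \<and> 0 \<le> j \<and> j \<le> h - 1}
               \<union> {vec_b n' w t i j | i j. 0 \<le> i \<and> i \<le> w - t - 1 \<and> 0 \<le> j \<and> j \<le> h - 1};
             deg = (\<lambda>v. card {c \<in> H. v \<in> supp_vec n' c})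
         in ternary_code n' (2 * w - 2) w H \<and>
            card {v \<in> {0..<n'}. deg v = nat (w - t)} = nat (h * (w - t)) \<and>
            (\<forall>v\<in>{0..<n'}. deg v \<noteq> nat (w - t) \<longrightarrow> deg v = nat (2 * w - t - 1))"
proof -
  interpret gsetup w t h a using assms by unfold_locales auto
  show ?thesis unfolding Let_def HH_eq using code count_lemma rest_lemma by simp
qed



end
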